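(* Let $G$ be a finite nilpotent group and let $M,N$ be normal subgroups with $1<M\le N<G$ such that every $g\in G\setminus N$ is conjugate in $G$ to every element of $gM$. Then there is a prime $p$ such that both $M$ and $G/N$ are $p$-groups. *)

theory Defs
  imports "HOL-Algebra.Algebra" "HOL-Computational_Algebra.Primes"
begin

definition commutator_subgroup :: "('a, 'b) monoid_scheme \<Rightarrow> 'a set \<Rightarrow> 'a set \<Rightarrow> 'a set" where
  "commutator_subgroup G H K = generate G
     (\<Union>h \<in> H. \<Union>k \<in> K. {h \<otimes>\<^bsub>G\<^esub> k \<otimes>\<^bsub>G\<^esub> inv\<^bsub>G\<^esub> h \<otimes>\<^bsub>G\<^esub> inv\<^bsub>G\<^esub> k})"

fun lower_central :: "('a, 'b) monoid_scheme \<Rightarrow> nat \<Rightarrow> 'a set" where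
  "lower_central G 0 = carrier G"
| "lower_central G (Suc n) = commutator_subgroup G (lower_central G n) (carrier G)"

definition nilpotent_group :: "('a, 'b) monoid_scheme \<Rightarrow> bool" where
  "nilpotent_group G \<longleftrightarrow> group G \<and> (\<exists>n. lower_central G n = {\<one>\<^bsub>G\<^esub>})"

definition p_group :: "nat \<Rightarrow> ('a, 'b) monoid_scheme \<Rightarrow> bool" where
  "p_group p G \<longleftrightarrow> group G \<and> finite (carrier G) \<and> (\<exists>k. card (carrier G) = p ^ k)"

definition conjugate_in :: "('a, 'b) monoid_scheme \<Rightarrow> 'a \<Rightarrow> 'a \<Rightarrow> bool" where
  "conjugate_in G x y \<longleftrightarrow> (\<exists>h \<in> carrier G. y = h \<otimes>\<^bsub>G\<^esub> x \<otimes>\<^bsub>G\<^esub> inv\<^bsub>G\<^esub> h)"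

end

theory Submission
  imports Defs
begin

lemma pp: fixes n p :: nat assumes "n > 0" "\<And>q. Factorial_Ring.prime q \<Longrightarrow> q dvd n \<Longrightarrow> q = p"
  shows "\<exists>k. n = p ^ k"
  using assms
proof (induction n rule: less_induct)
  case (less n)
  show ?case
  proof (cases "n = 1")
    case True then show ?thesis by (intro exI[of _ 0]) simp
  next
    case False
    then obtain q where q: "Factorial_Ring.prime q" "q dvd n" using prime_factor_nat by blast
    then have qp: "q = p" using less by blast
    then obtain m where m: "n = p * m" using q by auto
    have p1: "p > 1" using q qp prime_gt_1_nat by blast
    have m0: "m > 0" using m less.prems(1) by (cases m) auto
    have "m < n" using m p1 m0 by simp
    moreover have "\<And>r. Factorial_Ring.prime r \<Longrightarrow> r dvd m \<Longrightarrow> r = p"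
      using less.prems(2) m by (metis dvd_mult) 
    ultimately obtain k where "m = p ^ k" using less.IH m0 by blast
    then show ?thesis using m by (intro exI[of _ "Suc k"]) simp
  qed
qed
lemma (in group) comm_normal:
  assumes "H \<lhd> G" shows "commutator_subgroup G H (carrier G) \<lhd> G"
proof -
  interpret H: normal H G using assms .
  show ?thesis
    unfolding commutator_subgroup_def
  proof (rule normal_generateI)
    show "(\<Union>h\<in>H. \<Union>k\<in>carrier G. {h \<otimes> k \<otimes> inv h \<otimes> inv k}) \<subseteq> carrier G"
      using H.subset by auto
  next
    fix h g assume "h \<in> (\<Union>h\<in>H. \<Union>k\<in>carrier G. {h \<otimes> k \<otimes> inv h \<otimes> inv k})" and g: "g \<in> carrier G"
    then obtain h1 h2 where h: "h1 \<in> H" "h2 \<in> carrier G" "h = h1 \<otimes> h2 \<otimes> inv h1 \<otimes> inv h2"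
      by auto
    hence in_carrier: "h1 \<in> carrier G" "h2 \<in> carrier G" "g \<in> carrier G"
      using H.subset g by auto
    have "g \<otimes> h \<otimes> inv g =
           g \<otimes> h1 \<otimes> (inv g \<otimes> g) \<otimes> h2 \<otimes> (inv g \<otimes> g) \<otimes> inv h1 \<otimes> (inv g \<otimes> g) \<otimes> inv h2 \<otimes> inv g"
      unfolding h(3) by (simp add: in_carrier m_assoc)
    also have " ... =
          (g \<otimes> h1 \<otimes> inv g) \<otimes> (g \<otimes> h2 \<otimes> inv g) \<otimes> (g \<otimes> inv h1 \<otimes> inv g) \<otimes> (g \<otimes> inv h2 \<otimes> inv g)"
      using in_carrier m_assoc inv_closed m_closed by presburger
    finally have "g \<otimes> h \<otimes> inv g =
          (g \<otimes> h1 \<otimes> inv g) \<otimes> (g \<otimes> h2 \<otimes> inv g) \<otimes> inv (g \<otimes> h1 \<otimes> inv g) \<otimes> inv (g \<otimes> h2 \<otimes> inv g)"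
      by (simp add: in_carrier inv_mult_group m_assoc)
    moreover have "g \<otimes> h1 \<otimes> inv g \<in> H" using h(1) H.inv_op_closed2[OF g] by blast
    moreover have "g \<otimes> h2 \<otimes> inv g \<in> carrier G" using in_carrier by simp
    ultimately show "g \<otimes> h \<otimes> inv g \<in> (\<Union>h\<in>H. \<Union>k\<in>carrier G. {h \<otimes> k \<otimes> inv h \<otimes> inv k})"
      by blast
  qed
qed

lemma (in group) lc_normal: "lower_central G i \<lhd> G"
  by (induction i) (auto simp: normal_self comm_normal)

lemma (in group) lc_comm:
  assumes "y \<in> lower_central G i" "x \<in> carrier G"
  shows "y \<otimes> x \<otimes> inv y \<otimes> inv x \<in> lower_central G (Suc i)"
  using assms unfolding lower_central.simps commutator_subgroup_def
  by (auto intro!: generate.incl)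

lemma (in group) inv_cancel_l [simp]:
  "x \<in> carrier G \<Longrightarrow> y \<in> carrier G \<Longrightarrow> inv x \<otimes> (x \<otimes> y) = y"
  by (simp add: m_assoc[symmetric])

lemma (in group) inv_cancel_r [simp]:
  "x \<in> carrier G \<Longrightarrow> y \<in> carrier G \<Longrightarrow> x \<otimes> (inv x \<otimes> y) = y"
  by (simp add: m_assoc[symmetric])

lemma (in group) conj_pow:
  assumes "h \<in> carrier G" "g \<in> carrier G"
  shows "(h \<otimes> g \<otimes> inv h) [^] (n::nat) = h \<otimes> g [^] n \<otimes> inv h"
proof (induction n)
  case 0 then show ?case using assms by simp
next
  case (Suc n)
  have "(h \<otimes> g \<otimes> inv h) [^] Suc n = (h \<otimes> g [^] n \<otimes> inv h) \<otimes> (h \<otimes> g \<otimes> inv h)"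
    using Suc by simp
  also have "\<dots> = h \<otimes> (g [^] n \<otimes> g) \<otimes> inv h"
    using assms by (simp add: m_assoc)
  finally show ?case by simp
qed

lemma (in group) core:
  assumes K: "K \<lhd> G" and y: "y \<in> carrier G" and g: "g \<in> carrier G"
    and comm: "y \<otimes> g \<otimes> inv y \<otimes> inv g \<in> K"
    and gn: "g [^] (n::nat) = \<one>" and gyn: "(g \<otimes> y) [^] n = \<one>"
  shows "y [^] n \<in> K"
proof -
  interpret K: normal K G using K .
  let ?Q = "G Mod K"
  let ?f = "\<lambda>a. K #> a"
  have eq: "K #> (y \<otimes> g) = K #> (g \<otimes> y)"
  proof -
    have "y \<otimes> g = (y \<otimes> g \<otimes> inv y \<otimes> inv g) \<otimes> (g \<otimes> y)"
      using y g by (simp add: m_assoc)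
    then have "K #> (y \<otimes> g) = (K #> (y \<otimes> g \<otimes> inv y \<otimes> inv g)) #> (g \<otimes> y)"
      using y g K.subset by (metis coset_mult_assoc m_closed inv_closed)
    also have "\<dots> = K #> (g \<otimes> y)" using comm K.rcos_const by simp
    finally show ?thesis .
  qed
  have Qg: "group ?Q" using K.factorgroup_is_group .
  have hom: "group_hom G ?Q ?f"
    using Qg K.r_coset_hom_Mod by (simp add: group_hom_def group_hom_axioms_def group_axioms)
  interpret h: group_hom G ?Q ?f using hom .
  have c: "?f g \<otimes>\<^bsub>?Q\<^esub> ?f y = ?f y \<otimes>\<^bsub>?Q\<^esub> ?f g"
    using eq y g by (simp add: h.hom_mult[symmetric])
  have "?f (y [^] n) = \<one>\<^bsub>?Q\<^esub> \<otimes>\<^bsub>?Q\<^esub> ?f (y [^] n)"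
    using y by (intro monoid.l_one[OF group.is_monoid[OF Qg], symmetric] h.hom_closed nat_pow_closed)
  also have "\<dots> = ?f (g [^] n) \<otimes>\<^bsub>?Q\<^esub> ?f (y [^] n)" using gn by simp
  also have "\<dots> = ?f g [^]\<^bsub>?Q\<^esub> n \<otimes>\<^bsub>?Q\<^esub> ?f y [^]\<^bsub>?Q\<^esub> n"
    using y g by (simp add: h.hom_nat_pow)
  also have "\<dots> = (?f g \<otimes>\<^bsub>?Q\<^esub> ?f y) [^]\<^bsub>?Q\<^esub> n"
    by (rule sym, rule monoid.pow_mult_distrib[OF group.is_monoid[OF Qg] c h.hom_closed[OF g] h.hom_closed[OF y]])
  also have "\<dots> = ?f ((g \<otimes> y) [^] n)"
    using y g by (simp add: h.hom_nat_pow h.hom_mult)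
  also have "\<dots> = K #> \<one>" using gyn by simp
  also have "\<dots> = K" using K.subset by (simp add: coset_mult_one)
  finally have "K #> (y [^] n) = K" .
  then show ?thesis using coset_join1 K.subgroup_axioms y by auto
qed


lemma (in group) sub_pow_card:
  assumes fin: "finite (carrier G)" and S: "subgroup S G" and x: "x \<in> S"
  shows "x [^] card S = \<one>"
proof -
  interpret S: group "G\<lparr>carrier := S\<rparr>" using subgroup.subgroup_is_group[OF S] group_axioms by blast
  have "finite S" using fin S subgroup.subset finite_subset by blast
  have "x [^]\<^bsub>G\<lparr>carrier := S\<rparr>\<^esub> order (G\<lparr>carrier := S\<rparr>) = \<one>\<^bsub>G\<lparr>carrier := S\<rparr>\<^esub>"
    using S.pow_order_eq_1 x by simp
  then show ?thesis by (simp add: order_def nat_pow_consistent[symmetric])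
qed

lemma (in group) coprime_pow_one:
  assumes x: "x \<in> carrier G" and "x [^] (a::nat) = \<one>" "x [^] (b::nat) = \<one>" "coprime a b"
  shows "x = \<one>"
proof -
  have "ord x dvd a" "ord x dvd b" using assms pow_eq_id by auto
  then have "ord x = 1" using assms(4) by (metis coprime_common_divisor_nat)
  then have "ord x dvd 1" by simp
  then have "x [^] (1::nat) = \<one>" using pow_eq_id x by blast
  then show ?thesis using x by simp
qed

lemma (in group) step:
  assumes fin: "finite (carrier G)" and L: "subgroup L G" and K: "K \<lhd> G"
    and cK: "card K = p ^ k" and p: "Factorial_Ring.prime p"
    and g: "g \<in> carrier G" and gn: "g [^] (p ^ b) = \<one>"
    and comm: "\<And>y x. y \<in> L \<Longrightarrow> x \<in> carrier G \<Longrightarrow> y \<otimes> x \<otimes> inv y \<otimes> inv x \<in> K"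
    and pw: "\<And>y. y \<in> L \<Longrightarrow> (g \<otimes> y) [^] (p ^ b) = \<one>"
  shows "\<exists>k. card L = p ^ k"
proof (rule pp)
  have finL: "finite L" using fin L subgroup.subset finite_subset by blast
  then show "card L > 0" using L subgroup.one_closed card_gt_0_iff by blast
  fix q :: nat assume q: "Factorial_Ring.prime q" "q dvd card L"
  show "q = p"
  proof (rule ccontr)
    assume qp: "q \<noteq> p"
    define a where "a = multiplicity q (card L)"
    obtain m where m: "card L = q ^ a * m" using multiplicity_dvd[of q "card L"] a_def by (metis dvdE)
    interpret LG: group "G\<lparr>carrier := L\<rparr>" using subgroup.subgroup_is_group[OF L] group_axioms by blast
    have "order (G\<lparr>carrier := L\<rparr>) = q ^ a * m" using m by (simp add: order_def)
    then obtain H where H: "subgroup H (G\<lparr>carrier := L\<rparr>)" "card H = q ^ a"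
      using sylow_thm[of q "G\<lparr>carrier := L\<rparr>" a m] q finL LG.is_group by auto
    have HG: "subgroup H G" using incl_subgroup[OF L H(1)] .
    have HL: "H \<subseteq> L" using subgroup.subset[OF H(1)] by simp
    have "card L \<noteq> 0" using \<open>card L > 0\<close> by simp
    then have "1 \<le> a" unfolding a_def using q
      by (intro multiplicity_geI) (auto simp: prime_def)
    have q1: "q > 1" using q prime_gt_1_nat by blast
    have "q ^ 1 \<le> q ^ a" using \<open>1 \<le> a\<close> q1 power_increasing[of 1 a q] by linarith
    then have "q \<le> card H" using H(2) by simp
    then have cH: "card H \<ge> 2" using q1 by linarith
    have "\<exists>y\<in>H. y \<noteq> \<one>"
    proof (rule ccontr)
      assume "\<not> ?thesis"
      then have "H \<subseteq> {\<one>}" by auto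
      then have "card H \<le> card {\<one>}" by (intro card_mono) auto
      then show False using cH by simp
    qed
    then obtain y where y: "y \<in> H" "y \<noteq> \<one>" by blast
    have yL: "y \<in> L" using y HL by auto
    have yc: "y \<in> carrier G" using yL L subgroup.subset by auto
    have "y [^] (p ^ b) \<in> K"
      using core[OF K yc g comm[OF yL g] gn pw[OF yL]] .
    then have "(y [^] (p ^ b)) [^] card K = \<one>"
      using sub_pow_card[OF fin normal_imp_subgroup[OF K]] by blast
    then have e1: "y [^] (p ^ b * p ^ k) = \<one>" using cK yc by (simp add: nat_pow_pow)
    have e2: "y [^] (q ^ a) = \<one>" using sub_pow_card[OF fin HG y(1)] H(2) by simp
    have "coprime (p ^ b * p ^ k) (q ^ a)"
      using primes_coprime[OF p q(1)] qp by (simp add: coprime_commute)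
    then have "y = \<one>" using coprime_pow_one[OF yc e1 e2] by simp
    then show False using y by simp
  qed
qed

lemma (in group) main_p:
  assumes fin: "finite (carrier G)" and nil: "lower_central G n = {\<one>}"
    and M: "M \<lhd> G" and N: "N \<lhd> G" and MN: "M \<subseteq> N"
    and hyp: "\<And>g m. g \<in> carrier G - N \<Longrightarrow> m \<in> M \<Longrightarrow> conjugate_in G g (g \<otimes> m)"
    and p: "Factorial_Ring.prime p" and pc: "p dvd card (carrier (G Mod N))"
  shows "\<exists>k. card M = p ^ k"
proof -
  have lag: "card (carrier (G Mod N)) * card N = order G"
    using lagrange[OF normal_imp_subgroup[OF N]] by (simp add: FactGroup_def)
  define a where "a = multiplicity p (order G)"
  obtain m where m: "order G = p ^ a * m" using multiplicity_dvd[of p "order G"] a_def by (metis dvdE)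
  obtain P where P: "subgroup P G" "card P = p ^ a"
    using sylow_thm[OF p is_group m fin] by blast
  have oG: "order G \<noteq> 0" using fin one_closed by (auto simp: order_def)
  have "\<not> P \<subseteq> N"
  proof
    assume PN: "P \<subseteq> N"
    have NS: "subgroup N G" using normal_imp_subgroup[OF N] .
    interpret NG: group "G\<lparr>carrier := N\<rparr>" using subgroup.subgroup_is_group[OF NS] group_axioms by blast
    have "subgroup P (G\<lparr>carrier := N\<rparr>)" using subgroup_incl[OF P(1) NS PN] .
    from NG.lagrange[OF this] have "card P dvd card N" by (simp add: order_def) (metis dvd_triv_right)
    then have "p ^ a * p dvd card (carrier (G Mod N)) * card N"
      using pc P(2) by (metis mult.commute mult_dvd_mono)
    then have "p ^ Suc a dvd order G" using lag by (simp add: mult.commute)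
    then have "Suc a \<le> a" unfolding a_def using oG p
      by (intro multiplicity_geI) (auto simp: prime_def)
    then show False by simp
  qed
  then obtain g where g: "g \<in> P" "g \<notin> N" by blast
  have gc: "g \<in> carrier G" using g P(1) subgroup.subset by auto
  have gn: "g [^] (p ^ a) = \<one>" using sub_pow_card[OF fin P(1) g(1)] P(2) by simp
  have MS: "subgroup M G" using normal_imp_subgroup[OF M] .
  have ind: "d \<le> n \<Longrightarrow> \<exists>k. card (lower_central G (n - d) \<inter> M) = p ^ k" for d
  proof (induction d)
    case 0
    have "lower_central G n \<inter> M = {\<one>}" using nil subgroup.one_closed[OF MS] by auto
    then show ?case by (intro exI[of _ 0]) simp
  next
    case (Suc d)
    define i where "i = n - Suc d"
    have si: "n - d = Suc i" using Suc.prems i_def by simp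
    obtain k where k: "card (lower_central G (Suc i) \<inter> M) = p ^ k" using Suc si by auto
    have "\<exists>k. card (lower_central G i \<inter> M) = p ^ k"
    proof (rule step[OF fin _ _ k p gc gn])
      show "subgroup (lower_central G i \<inter> M) G"
        using subgroup_Int[OF normal_imp_subgroup[OF lc_normal] MS] .
      show "lower_central G (Suc i) \<inter> M \<lhd> G"
        using normal_subgroup_intersect[OF lc_normal M] .
    next
      fix y x assume y: "y \<in> lower_central G i \<inter> M" and x: "x \<in> carrier G"
      have yc: "y \<in> carrier G" using y MS subgroup.subset by auto
      have "y \<otimes> x \<otimes> inv y \<otimes> inv x \<in> lower_central G (Suc i)"
        using lc_comm y x by auto
      moreover have "y \<otimes> x \<otimes> inv y \<otimes> inv x \<in> M"
      proof -
        have "inv y \<in> M" using y MS subgroup.m_inv_closed by auto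
        then have "x \<otimes> inv y \<otimes> inv x \<in> M" using normal.inv_op_closed2[OF M x] by blast
        then have "y \<otimes> (x \<otimes> inv y \<otimes> inv x) \<in> M" using y MS subgroup.m_closed by auto
        then show ?thesis using yc x by (simp add: m_assoc)
      qed
      ultimately show "y \<otimes> x \<otimes> inv y \<otimes> inv x \<in> lower_central G (Suc i) \<inter> M" by blast
    next
      fix y assume y: "y \<in> lower_central G i \<inter> M"
      then have "conjugate_in G g (g \<otimes> y)" using hyp gc g(2) by auto
      then obtain h where h: "h \<in> carrier G" "g \<otimes> y = h \<otimes> g \<otimes> inv h"
        unfolding conjugate_in_def by blast
      have "(g \<otimes> y) [^] (p ^ a) = h \<otimes> g [^] (p ^ a) \<otimes> inv h"
        using h conj_pow gc by simp
      also have "\<dots> = \<one>" using gn h by simp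
      finally show "(g \<otimes> y) [^] (p ^ a) = \<one>" .
    qed
    then show ?case using i_def by simp
  qed
  from ind[of n] have "\<exists>k. card (carrier G \<inter> M) = p ^ k" by simp
  moreover have "carrier G \<inter> M = M" using MS subgroup.subset by auto
  ultimately show ?thesis by simp
qed

theorem mainTheorem14:
  fixes G :: "('a, 'b) monoid_scheme" and M N :: "'a set"
  assumes "nilpotent_group G"
    and "finite (carrier G)"
    and "M \<lhd> G" and "N \<lhd> G"
    and "M \<noteq> {\<one>\<^bsub>G\<^esub>}"
    and "M \<subseteq> N"
    and "N \<noteq> carrier G"
    and "\<And>g m. g \<in> carrier G - N \<Longrightarrow> m \<in> M \<Longrightarrow> conjugate_in G g (g \<otimes>\<^bsub>G\<^esub> m)"
  shows "\<exists>p::nat. Factorial_Ring.prime p \<and> p_group p (G\<lparr>carrier := M\<rparr>) \<and> p_group p (G Mod N)"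
proof -
  have grp: "group G" and "\<exists>n. lower_central G n = {\<one>\<^bsub>G\<^esub>}"
    using assms(1) unfolding nilpotent_group_def by auto
  then obtain n where nil: "lower_central G n = {\<one>\<^bsub>G\<^esub>}" by blast
  interpret group G using grp .
  let ?c = "card (carrier (G Mod N))"
  have Qg: "group (G Mod N)" using normal.factorgroup_is_group[OF assms(4)] .
  have finQ: "finite (carrier (G Mod N))" using assms(2) by (simp add: carrier_FactGroup)
  have c0: "?c > 0" using finQ monoid.one_closed[OF group.is_monoid[OF Qg]] by (auto simp: card_gt_0_iff)
  have c1: "?c \<noteq> 1"
  proof
    assume "?c = 1"
    then obtain U0 where "carrier (G Mod N) = {U0}" using card_1_singletonE by blast
    then have "carrier (G Mod N) = {\<one>\<^bsub>G Mod N\<^esub>}"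
      using group.is_monoid[OF Qg] monoid.one_closed by (metis singletonD)
    then show False using normal.fact_group_trivial_iff[OF assms(4) assms(2)] assms(7) by simp
  qed
  obtain p where p: "Factorial_Ring.prime p" "p dvd ?c" using prime_factor_nat[OF c1] by blast
  have MP: "\<exists>k. card M = q ^ k" if "Factorial_Ring.prime q" "q dvd ?c" for q
    using main_p[OF assms(2) nil assms(3) assms(4) assms(6) assms(8) that] .
  obtain k where k: "card M = p ^ k" using MP p by blast
  have MS: "subgroup M G" using normal_imp_subgroup[OF assms(3)] .
  have finM: "finite M" using assms(2) MS subgroup.subset finite_subset by blast
  have "k \<noteq> 0"
  proof
    assume "k = 0"
    then have "card M = 1" using k by simp
    then obtain x where "M = {x}" using card_1_singletonE by blast
    then show False using subgroup.one_closed[OF MS] assms(5) by auto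
  qed
  have "\<exists>j. ?c = p ^ j"
  proof (rule pp[OF c0])
    fix q :: nat assume q: "Factorial_Ring.prime q" "q dvd ?c"
    obtain j where "card M = q ^ j" using MP q by blast
    then have "p ^ k = q ^ j" using k by simp
    moreover have "p dvd p ^ k" using \<open>k \<noteq> 0\<close> by simp
    ultimately have "p dvd q ^ j" by simp
    then have "p dvd q" using prime_dvd_power[OF p(1)] by blast
    then show "q = p" using primes_dvd_imp_eq[OF p(1) q(1)] by simp
  qed
  moreover have "group (G\<lparr>carrier := M\<rparr>)" using subgroup.subgroup_is_group[OF MS grp] .
  ultimately show ?thesis
    using p k finM finQ Qg unfolding p_group_def by auto
qed

end
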